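(* Consider the following chemical reaction network (the ERK cascade with a negative feedback, in which MEK and ERK share the phosphatase PH) with 25 species RAF, pRAF, MEK, pMEK, ppMEK, ERK, pERK, ppERK, RAS, RAFPH, PH, PH2, RAS-RAF, MEK-pRAF, pMEK-pRAF, ERK-ppMEK, pERK-ppMEK, RAF-RAFPH, ppMEK-PH, pMEK-PH, ppERK-PH, pERK-PH, pRAF-ppERK, Z-PH2, Z and 36 reactions with rate constants $k_1,\dots,k_{36}$: RAF + RAS $\underset{k_2}{\overset{k_1}{\rightleftarrows}}$ RAS-RAF $\overset{k_3}{\to}$ pRAF + RAS; pRAF + RAFPH $\underset{k_5}{\overset{k_4}{\rightleftarrows}}$ RAF-RAFPH $\overset{k_6}{\to}$ RAF + RAFPH; MEK + pRAF $\underset{k_8}{\overset{k_7}{\rightleftarrows}}$ MEK-pRAF $\overset{k_9}{\to}$ pMEK + pRAF $\underset{k_{11}}{\overset{k_{10}}{\rightleftarrows}}$ pMEK-pRAF $\overset{k_{12}}{\to}$ ppMEK + pRAF; ppMEK + PH $\underset{k_{14}}{\overset{k_{13}}{\rightleftarrows}}$ ppMEK-PH $\overset{k_{15}}{\to}$ pMEK + PH $\underset{k_{17}}{\overset{k_{16}}{\rightleftarrows}}$ pMEK-PH $\overset{k_{18}}{\to}$ MEK + PH; ERK + ppMEK $\underset{k_{20}}{\overset{k_{19}}{\rightleftarrows}}$ ERK-ppMEK $\overset{k_{21}}{\to}$ pERK + ppMEK $\underset{k_{23}}{\overset{k_{22}}{\rightleftarrows}}$ pERK-ppMEK $\overset{k_{24}}{\to}$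 ppERK + ppMEK; ppERK + PH $\underset{k_{26}}{\overset{k_{25}}{\rightleftarrows}}$ ppERK-PH $\overset{k_{27}}{\to}$ pERK + PH $\underset{k_{29}}{\overset{k_{28}}{\rightleftarrows}}$ pERK-PH $\overset{k_{30}}{\to}$ ERK + PH; pRAF + ppERK $\underset{k_{32}}{\overset{k_{31}}{\rightleftarrows}}$ pRAF-ppERK $\overset{k_{33}}{\to}$ Z + ppERK; Z + PH2 $\underset{k_{35}}{\overset{k_{34}}{\rightleftarrows}}$ Z-PH2 $\overset{k_{36}}{\to}$ pRAF + PH2. Then for every choice of positive rate constants $k\in\mathbb{R}^{36}_{>0}$, the associated mass-action system has toric steady states; in particular its steady state ideal is a binomial ideal.
   Context: For a reaction network with species concentrations $x=(x_1,\dots,x_s)$ and reactions $y\to y'$ (complexes $y,y'\in\mathbb{Z}_{\ge0}^s$, where a complex is a formal sum of species) with positive rate constants, the mass-action system is $\dot x = f(x;k)=\sum_{\text{reactions } y\to y'} k_{y\to y'}\, x^{y}(y'-y)$, whose components $f_1,\dots,f_s$ are polynomials in $x$. The steady state ideal is $J=\langle f_1,\dots,f_s\rangle\subseteq\mathbb{R}[x_1,\dots,x_s]$. The system has toric steady states if $J$ can be generated by binomials (polynomials with at most two terms) and $J$ admits nonnegative zeros. *)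

theory Defs
  imports Complex_Main "HOL-Library.Poly_Mapping"
begin

text \<open>Multivariate real polynomials in variables x_0, x_1, ... (indexed by nat), represented
  as finitely supported maps from monomials (exponent vectors nat =>0 nat) to real coefficients.\<close>

type_synonym mpoly = "(nat \<Rightarrow>\<^sub>0 nat) \<Rightarrow>\<^sub>0 real"

definition pvars :: "mpoly \<Rightarrow> nat set" where
  "pvars p = {i. \<exists>m \<in> Poly_Mapping.keys p. i \<in> Poly_Mapping.keys m}"

definition peval :: "mpoly \<Rightarrow> (nat \<Rightarrow> real) \<Rightarrow> real" where
  "peval p x = (\<Sum>m \<in> Poly_Mapping.keys p. Poly_Mapping.lookup p m * (\<Prod>i \<in> Poly_Mapping.keys m. x i ^ Poly_Mapping.lookup m i))"

definition is_binomial :: "mpoly \<Rightarrow> bool" where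
  "is_binomial p \<longleftrightarrow> card (Poly_Mapping.keys p) \<le> 2"

text \<open>The ideal generated by S inside the polynomial ring R[x_0,...,x_{n-1}].\<close>
definition ideal_in :: "nat \<Rightarrow> mpoly set \<Rightarrow> mpoly set" where
  "ideal_in n S = {(\<Sum>g\<in>F. c g * g) | F c. finite F \<and> F \<subseteq> S \<and>
                       (\<forall>g\<in>F. pvars (c g) \<subseteq> {..<n})}"

definition xmon :: "(nat \<Rightarrow>\<^sub>0 nat) \<Rightarrow> mpoly" where
  "xmon y = Poly_Mapping.single y 1"

text \<open>Mass-action vector field: reactions given as a list of (rate index, source, product);
  component i of f is  sum over reactions of k_r x^y (y'_i - y_i).\<close>
definition mass_action :: "(nat \<Rightarrow> real) \<Rightarrow> (nat \<times> (nat \<Rightarrow>\<^sub>0 nat) \<times> (nat \<Rightarrow>\<^sub>0 nat)) list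
                           \<Rightarrow> nat \<Rightarrow> mpoly" where
  "mass_action k R i = (\<Sum>(r, y, y') \<leftarrow> R.
      Poly_Mapping.single 0 (k r * (real (Poly_Mapping.lookup y' i) - real (Poly_Mapping.lookup y i))) * xmon y)"

definition sp :: "nat \<Rightarrow> (nat \<Rightarrow>\<^sub>0 nat)" where
  "sp i = Poly_Mapping.single i 1"

definition RAF where "RAF = sp 0"
definition pRAF where "pRAF = sp 1"
definition MEK where "MEK = sp 2"
definition pMEK where "pMEK = sp 3"
definition ppMEK where "ppMEK = sp 4"
definition ERK where "ERK = sp 5"
definition pERK where "pERK = sp 6"
definition ppERK where "ppERK = sp 7"
definition RAS where "RAS = sp 8"
definition RAFPH where "RAFPH = sp 9"
definition PH where "PH = sp 10"
definition PH2 where "PH2 = sp 11"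
definition RAS_RAF where "RAS_RAF = sp 12"
definition MEK_pRAF where "MEK_pRAF = sp 13"
definition pMEK_pRAF where "pMEK_pRAF = sp 14"
definition ERK_ppMEK where "ERK_ppMEK = sp 15"
definition pERK_ppMEK where "pERK_ppMEK = sp 16"
definition RAF_RAFPH where "RAF_RAFPH = sp 17"
definition ppMEK_PH where "ppMEK_PH = sp 18"
definition pMEK_PH where "pMEK_PH = sp 19"
definition ppERK_PH where "ppERK_PH = sp 20"
definition pERK_PH where "pERK_PH = sp 21"
definition pRAF_ppERK where "pRAF_ppERK = sp 22"
definition Z_PH2 where "Z_PH2 = sp 23"
definition Z where "Z = sp 24"

definition num_species :: nat where "num_species = 25"

text \<open>The 36 reactions of the ERK cascade with negative feedback; (r, y, y') means y -> y'
  with rate constant k_r.\<close>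
definition erk_reactions :: "(nat \<times> (nat \<Rightarrow>\<^sub>0 nat) \<times> (nat \<Rightarrow>\<^sub>0 nat)) list" where
  "erk_reactions = [
    (1, RAF + RAS, RAS_RAF), (2, RAS_RAF, RAF + RAS), (3, RAS_RAF, pRAF + RAS),
    (4, pRAF + RAFPH, RAF_RAFPH), (5, RAF_RAFPH, pRAF + RAFPH), (6, RAF_RAFPH, RAF + RAFPH),
    (7, MEK + pRAF, MEK_pRAF), (8, MEK_pRAF, MEK + pRAF), (9, MEK_pRAF, pMEK + pRAF),
    (10, pMEK + pRAF, pMEK_pRAF), (11, pMEK_pRAF, pMEK + pRAF), (12, pMEK_pRAF, ppMEK + pRAF),
    (13, ppMEK + PH, ppMEK_PH), (14, ppMEK_PH, ppMEK + PH), (15, ppMEK_PH, pMEK + PH),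
    (16, pMEK + PH, pMEK_PH), (17, pMEK_PH, pMEK + PH), (18, pMEK_PH, MEK + PH),
    (19, ERK + ppMEK, ERK_ppMEK), (20, ERK_ppMEK, ERK + ppMEK), (21, ERK_ppMEK, pERK + ppMEK),
    (22, pERK + ppMEK, pERK_ppMEK), (23, pERK_ppMEK, pERK + ppMEK), (24, pERK_ppMEK, ppERK + ppMEK),
    (25, ppERK + PH, ppERK_PH), (26, ppERK_PH, ppERK + PH), (27, ppERK_PH, pERK + PH),
    (28, pERK + PH, pERK_PH), (29, pERK_PH, pERK + PH), (30, pERK_PH, ERK + PH),
    (31, pRAF + ppERK, pRAF_ppERK), (32, pRAF_ppERK, pRAF + ppERK), (33, pRAF_ppERK, Z + ppERK),
    (34, Z + PH2, Z_PH2), (35, Z_PH2, Z + PH2), (36, Z_PH2, pRAF + PH2)]"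

definition steady_state_ideal :: "nat \<Rightarrow> (nat \<Rightarrow> real) \<Rightarrow>
    (nat \<times> (nat \<Rightarrow>\<^sub>0 nat) \<times> (nat \<Rightarrow>\<^sub>0 nat)) list \<Rightarrow> mpoly set" where
  "steady_state_ideal s k R = ideal_in s {mass_action k R i | i. i < s}"

definition has_toric_steady_states :: "nat \<Rightarrow> (nat \<Rightarrow> real) \<Rightarrow>
    (nat \<times> (nat \<Rightarrow>\<^sub>0 nat) \<times> (nat \<Rightarrow>\<^sub>0 nat)) list \<Rightarrow> bool" where
  "has_toric_steady_states s k R \<longleftrightarrow>
     (\<exists>B. (\<forall>b\<in>B. is_binomial b \<and> pvars b \<subseteq> {..<s}) \<and>
          ideal_in s B = steady_state_ideal s k R) \<and>
     (\<exists>x::nat \<Rightarrow> real. (\<forall>i<s. 0 \<le> x i) \<and> (\<forall>p \<in> steady_state_ideal s k R. peval p x = 0))"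

end

theory Submission
  imports Defs
begin

lemma single0_sum: "Poly_Mapping.single 0 (\<Sum>i\<in>I. g i) = (\<Sum>i\<in>I. Poly_Mapping.single 0 (g i) :: mpoly)"
proof (cases "finite I")
  case True then show ?thesis
    by (induction I rule: finite_induct) (simp_all add: single_add)
qed simp

lemma ma_cons: "mass_action k ((r,y,y')#R) i =
   Poly_Mapping.single 0 (k r * (real (Poly_Mapping.lookup y' i) - real (Poly_Mapping.lookup y i))) * xmon y + mass_action k R i"
  by (simp add: mass_action_def)

lemma ma_lin: "(\<Sum>i\<in>I. mass_action k R i) = (\<Sum>(r,y,y')\<leftarrow>R.
      Poly_Mapping.single 0 (k r * (\<Sum>i\<in>I. real (Poly_Mapping.lookup y' i) - real (Poly_Mapping.lookup y i))) * xmon y)"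
proof (induction R)
  case Nil then show ?case by (simp add: mass_action_def)
next
  case (Cons a R)
  obtain r y y' where a: "a = (r,y,y')" by (cases a) auto
  have "(\<Sum>i\<in>I. mass_action k (a#R) i) = (\<Sum>i\<in>I. Poly_Mapping.single 0 (k r * (real (Poly_Mapping.lookup y' i) - real (Poly_Mapping.lookup y i))) * xmon y) + (\<Sum>i\<in>I. mass_action k R i)"
    by (simp add: a ma_cons sum.distrib)
  also have "(\<Sum>i\<in>I. Poly_Mapping.single 0 (k r * (real (Poly_Mapping.lookup y' i) - real (Poly_Mapping.lookup y i))) * xmon y)
     = Poly_Mapping.single 0 (k r * (\<Sum>i\<in>I. real (Poly_Mapping.lookup y' i) - real (Poly_Mapping.lookup y i))) * xmon y"
    by (simp add: sum_distrib_left single0_sum sum_distrib_right)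
  finally show ?case using Cons by (simp add: a)
qed

lemma keys_ma_bound:
  assumes "\<forall>(r,y,y')\<in>set R. c r y y' = 0 \<or> y \<in> A"
  shows "Poly_Mapping.keys ((\<Sum>(r,y,y')\<leftarrow>R. Poly_Mapping.single 0 (c r y y') * xmon y) :: mpoly) \<subseteq> A"
  using assms
proof (induction R)
  case Nil then show ?case by simp
next
  case (Cons a R)
  obtain r y y' where a: "a = (r,y,y')" by (cases a) auto
  have "Poly_Mapping.keys (Poly_Mapping.single 0 (c r y y') * xmon y :: mpoly) \<subseteq> A"
    using Cons.prems by (auto simp: a xmon_def mult_single)
  moreover have "Poly_Mapping.keys ((\<Sum>(r,y,y')\<leftarrow>R. Poly_Mapping.single 0 (c r y y') * xmon y) :: mpoly) \<subseteq> A"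
    using Cons by auto
  ultimately show ?case using keys_add by (fastforce simp: a)
qed

lemma pvars_add: "pvars (p + q) \<subseteq> pvars p \<union> pvars q"
  unfolding pvars_def using keys_add by fastforce

lemma pvars_minus[simp]: "pvars (- p) = pvars p"
  unfolding pvars_def by simp

lemma pvars_zero[simp]: "pvars 0 = {}" and pvars_one[simp]: "pvars 1 = {}"
  unfolding pvars_def by auto

lemma pvars_mult: "pvars (p * q) \<subseteq> pvars p \<union> pvars q"
proof
  fix i assume "i \<in> pvars (p * q)"
  then obtain m where m: "m \<in> Poly_Mapping.keys (p*q)" "i \<in> Poly_Mapping.keys m" unfolding pvars_def by auto
  then obtain a b where "m = a + b" "a \<in> Poly_Mapping.keys p" "b \<in> Poly_Mapping.keys q"
    using keys_mult by blast
  with m(2) keys_add[of a b] show "i \<in> pvars p \<union> pvars q" unfolding pvars_def by auto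
qed

lemma ideal_mem: "p \<in> S \<Longrightarrow> p \<in> ideal_in n S"
  unfolding ideal_in_def
  by (rule CollectI, rule exI[of _ "{p}"], rule exI[of _ "\<lambda>_. 1"]) simp

lemma ideal_zero: "0 \<in> ideal_in n S"
  unfolding ideal_in_def
  by (rule CollectI, rule exI[of _ "{}"], rule exI[of _ "\<lambda>_. 1"]) simp

lemma ideal_add: assumes "p \<in> ideal_in n S" "q \<in> ideal_in n S" shows "p + q \<in> ideal_in n S"
proof -
  obtain F1 c1 where 1: "p = (\<Sum>g\<in>F1. c1 g * g)" "finite F1" "F1 \<subseteq> S" "\<forall>g\<in>F1. pvars (c1 g) \<subseteq> {..<n}"
    using assms(1) unfolding ideal_in_def by blast
  obtain F2 c2 where 2: "q = (\<Sum>g\<in>F2. c2 g * g)" "finite F2" "F2 \<subseteq> S" "\<forall>g\<in>F2. pvars (c2 g) \<subseteq> {..<n}"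
    using assms(2) unfolding ideal_in_def by blast
  define c where "c g = (if g \<in> F1 then c1 g else 0) + (if g \<in> F2 then c2 g else 0)" for g
  have "(\<Sum>g\<in>F1 \<union> F2. c g * g) = (\<Sum>g\<in>F1 \<union> F2. (if g \<in> F1 then c1 g * g else 0)) + (\<Sum>g\<in>F1 \<union> F2. (if g \<in> F2 then c2 g * g else 0))"
    unfolding sum.distrib[symmetric] by (rule sum.cong) (simp_all add: c_def distrib_right)
  also have "\<dots> = p + q"
    using 1 2 by (simp add: sum.If_cases Int_absorb1)
  finally have s: "(\<Sum>g\<in>F1 \<union> F2. c g * g) = p + q" .
  have "\<forall>g\<in>F1 \<union> F2. pvars (c g) \<subseteq> {..<n}"
  proof
    fix g assume "g \<in> F1 \<union> F2"
    have "pvars (c g) \<subseteq> pvars (if g \<in> F1 then c1 g else 0) \<union> pvars (if g \<in> F2 then c2 g else 0)"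
      unfolding c_def by (rule pvars_add)
    also have "\<dots> \<subseteq> {..<n}" using 1 2 by auto
    finally show "pvars (c g) \<subseteq> {..<n}" .
  qed
  then show ?thesis unfolding ideal_in_def
    by (intro CollectI exI[of _ "F1 \<union> F2"] exI[of _ c]) (use s 1 2 in simp)
qed

lemma ideal_uminus: assumes "p \<in> ideal_in n S" shows "- p \<in> ideal_in n S"
proof -
  obtain F c where 1: "p = (\<Sum>g\<in>F. c g * g)" "finite F" "F \<subseteq> S" "\<forall>g\<in>F. pvars (c g) \<subseteq> {..<n}"
    using assms(1) unfolding ideal_in_def by blast
  have "- p = (\<Sum>g\<in>F. (- c g) * g)" using 1 by (simp add: sum_negf)
  then show ?thesis unfolding ideal_in_def
    by (intro CollectI exI[of _ F] exI[of _ "\<lambda>g. - c g"]) (use 1 in simp)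
qed

lemma ideal_diff: "p \<in> ideal_in n S \<Longrightarrow> q \<in> ideal_in n S \<Longrightarrow> p - q \<in> ideal_in n S"
  using ideal_add[of p n S "- q"] ideal_uminus[of q n S] by simp

lemma ideal_smult: assumes "p \<in> ideal_in n S" "pvars d \<subseteq> {..<n}" shows "d * p \<in> ideal_in n S"
proof -
  obtain F c where 1: "p = (\<Sum>g\<in>F. c g * g)" "finite F" "F \<subseteq> S" "\<forall>g\<in>F. pvars (c g) \<subseteq> {..<n}"
    using assms(1) unfolding ideal_in_def by blast
  have "d * p = (\<Sum>g\<in>F. (d * c g) * g)" using 1 by (simp add: sum_distrib_left mult.assoc)
  moreover have "\<forall>g\<in>F. pvars (d * c g) \<subseteq> {..<n}" using 1 assms(2) pvars_mult by blast
  ultimately show ?thesis unfolding ideal_in_def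
    by (intro CollectI exI[of _ F] exI[of _ "\<lambda>g. d * c g"]) (use 1 in simp)
qed

lemma ideal_trans: "ideal_in n (ideal_in n S) \<subseteq> ideal_in n S"
proof
  fix p assume "p \<in> ideal_in n (ideal_in n S)"
  then obtain F c where 1: "p = (\<Sum>g\<in>F. c g * g)" "finite F" "F \<subseteq> ideal_in n S" "\<forall>g\<in>F. pvars (c g) \<subseteq> {..<n}"
    unfolding ideal_in_def by blast
  have "(\<Sum>g\<in>F. c g * g) \<in> ideal_in n S" using 1(2-4)
    by (induction F rule: finite_induct) (auto intro: ideal_zero ideal_add ideal_smult)
  then show "p \<in> ideal_in n S" using 1 by simp
qed

lemma ideal_mono: "S \<subseteq> T \<Longrightarrow> ideal_in n S \<subseteq> ideal_in n T"
  unfolding ideal_in_def by blast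

lemma ideal_eqI: "S \<subseteq> ideal_in n T \<Longrightarrow> T \<subseteq> ideal_in n S \<Longrightarrow> ideal_in n S = ideal_in n T"
  by (meson ideal_mono ideal_trans order_trans subset_antisym)

lemma comb_keys:
  assumes "\<forall>(r,y,y')\<in>set R. k r * (\<Sum>i\<in>I. real (Poly_Mapping.lookup y' i) - real (Poly_Mapping.lookup y i)) = 0 \<or> y \<in> A"
  shows "Poly_Mapping.keys (\<Sum>i\<in>I. mass_action k R i) \<subseteq> A"
  unfolding ma_lin by (rule keys_ma_bound[OF assms])

lemma sum_list_zero_ma:
  assumes "\<forall>(r,y,y')\<in>set R. c r y y' = 0"
  shows "((\<Sum>(r,y,y')\<leftarrow>R. Poly_Mapping.single 0 (c r y y') * xmon y) :: mpoly) = 0"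
  using assms by (induction R) auto

lemma comb_zero:
  assumes "\<forall>(r,y,y')\<in>set R. (\<Sum>i\<in>I. real (Poly_Mapping.lookup y' i) - real (Poly_Mapping.lookup y i)) = 0"
  shows "(\<Sum>i\<in>I. mass_action k R i) = 0"
  unfolding ma_lin by (rule sum_list_zero_ma) (use assms in auto)

lemma lookup_sp[simp]: "Poly_Mapping.lookup (sp a) i = (if a = i then 1 else 0)"
  by (simp add: sp_def lookup_single when_def)

lemma keys_sp[simp]: "Poly_Mapping.keys (sp a) = {a}"
  by (simp add: sp_def)

lemmas spdefs = RAF_def pRAF_def MEK_def pMEK_def ppMEK_def ERK_def pERK_def ppERK_def RAS_def
  RAFPH_def PH_def PH2_def RAS_RAF_def MEK_pRAF_def pMEK_pRAF_def ERK_ppMEK_def pERK_ppMEK_def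
  RAF_RAFPH_def ppMEK_PH_def pMEK_PH_def ppERK_PH_def pERK_PH_def pRAF_ppERK_def Z_PH2_def Z_def

lemma sp_ne0[simp]: "sp a \<noteq> 0" "sp a + sp b \<noteq> 0"
proof -
  show "sp a \<noteq> 0" by (metis lookup_sp lookup_zero zero_neq_one)
  have "Poly_Mapping.lookup (sp a + sp b) a \<noteq> 0" by (simp add: lookup_add)
  then show "sp a + sp b \<noteq> 0" by auto
qed

lemma lookup_mult_zero:
  fixes c g :: mpoly
  assumes "Poly_Mapping.lookup g 0 = 0"
  shows "Poly_Mapping.lookup (c * g) 0 = 0"
proof (rule ccontr)
  assume "Poly_Mapping.lookup (c * g) 0 \<noteq> 0"
  then have "0 \<in> Poly_Mapping.keys (c * g)" by (simp add: in_keys_iff)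
  then obtain a b where ab: "0 = a + b" "b \<in> Poly_Mapping.keys g" using keys_mult by blast
  have "b = 0"
  proof (rule poly_mapping_eqI)
    fix i
    have "Poly_Mapping.lookup (a + b) i = 0" using ab(1) by (metis lookup_zero)
    then show "Poly_Mapping.lookup b i = Poly_Mapping.lookup 0 i" by (simp add: lookup_add)
  qed
  with ab(2) assms show False by (simp add: in_keys_iff)
qed

lemma ideal_const:
  assumes "\<forall>g\<in>S. Poly_Mapping.lookup g 0 = 0" "p \<in> ideal_in n S"
  shows "Poly_Mapping.lookup p 0 = 0"
proof -
  obtain F c where 1: "p = (\<Sum>g\<in>F. c g * g)" "finite F" "F \<subseteq> S"
    using assms(2) unfolding ideal_in_def by blast
  show ?thesis using 1 assms(1) by (auto simp: lookup_sum intro!: sum.neutral lookup_mult_zero)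
qed

lemma peval_zero: "peval p (\<lambda>_. 0) = Poly_Mapping.lookup p 0"
proof -
  have "peval p (\<lambda>_. 0) = (\<Sum>m\<in>Poly_Mapping.keys p. if m = 0 then Poly_Mapping.lookup p m else 0)"
    unfolding peval_def
  proof (rule sum.cong)
    fix m assume "m \<in> Poly_Mapping.keys p"
    show "Poly_Mapping.lookup p m * (\<Prod>i\<in>Poly_Mapping.keys m. (0::real) ^ Poly_Mapping.lookup m i)
       = (if m = 0 then Poly_Mapping.lookup p m else 0)"
    proof (cases "m = 0")
      case False
      then obtain i where "i \<in> Poly_Mapping.keys m" using keys_eq_empty by blast
      then have "(\<Prod>i\<in>Poly_Mapping.keys m. (0::real) ^ Poly_Mapping.lookup m i) = 0"
        by (intro prod_zero) (auto simp: in_keys_iff)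
      then show ?thesis using False by simp
    qed simp
  qed simp
  also have "\<dots> = Poly_Mapping.lookup p 0" by (simp add: sum.delta in_keys_iff)
  finally show ?thesis .
qed

lemma ma_const:
  assumes "\<forall>(r,y,y')\<in>set R. y \<noteq> 0"
  shows "Poly_Mapping.lookup (mass_action k R i) 0 = 0"
  using assms
proof (induction R)
  case Nil then show ?case by (simp add: mass_action_def)
next
  case (Cons a R)
  obtain r y y' where a: "a = (r,y,y')" by (cases a) auto
  then show ?case using Cons
    by (simp add: ma_cons lookup_add xmon_def mult_single lookup_single when_def)
qed

lemma ideal_sum: "finite I \<Longrightarrow> (\<forall>i\<in>I. f i \<in> ideal_in n S) \<Longrightarrow> (\<Sum>i\<in>I. f i) \<in> ideal_in n S"
  by (induction I rule: finite_induct) (auto intro: ideal_zero ideal_add)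

lemma binom_of:
  assumes "Poly_Mapping.keys b \<subseteq> {y1, y2}" "Poly_Mapping.keys y1 \<subseteq> {..<n}" "Poly_Mapping.keys y2 \<subseteq> {..<n}"
  shows "is_binomial b \<and> pvars b \<subseteq> {..<n}"
proof
  have "card (Poly_Mapping.keys b) \<le> card {y1, y2}" by (rule card_mono[OF _ assms(1)]) simp
  also have "\<dots> \<le> 2" by (simp add: card_insert_le_m1)
  finally show "is_binomial b" unfolding is_binomial_def .
  show "pvars b \<subseteq> {..<n}" using assms unfolding pvars_def by blast
qed

lemma keys_sp2: "a < n \<Longrightarrow> b < n \<Longrightarrow> Poly_Mapping.keys (sp a + sp b) \<subseteq> {..<n}"
  using keys_add[of "sp a" "sp b"] by auto

lemma keys_sp1: "a < n \<Longrightarrow> Poly_Mapping.keys (sp a) \<subseteq> {..<n}"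
  by simp

theorem mainTheorem5:
  fixes k :: "nat \<Rightarrow> real"
  assumes "\<forall>i \<in> {1..36}. 0 < k i"
  shows "has_toric_steady_states num_species k erk_reactions"
proof -
  define f where "f = mass_action k erk_reactions"
  define Is where "Is = ({{0,12}, {2,13}, {4,18,15,16}, {5,15}, {7,20,22}, {24,23}, {12}, {13}, {14}, {15}, {16}, {17}, {18}, {19}, {20}, {21}, {22}, {23}} :: nat set set)"
  define B where "B = (\<lambda>I. \<Sum>i\<in>I. f i) ` Is"
  have F: "{mass_action k erk_reactions i | i. i < num_species} = f ` {..<25}"
    by (auto simp: f_def num_species_def)
  have hb0: "is_binomial (\<Sum>i\<in>{0,12}. f i) \<and> pvars (\<Sum>i\<in>{0,12}. f i) \<subseteq> {..<25}"
  proof (rule binom_of)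
    show "Poly_Mapping.keys (\<Sum>i\<in>{0,12}. f i) \<subseteq> {RAS_RAF, RAF_RAFPH}"
      unfolding f_def by (rule comb_keys) (simp add: erk_reactions_def spdefs lookup_add)
  qed (simp_all add: spdefs keys_sp2 keys_sp1)
  have hb1: "is_binomial (\<Sum>i\<in>{2,13}. f i) \<and> pvars (\<Sum>i\<in>{2,13}. f i) \<subseteq> {..<25}"
  proof (rule binom_of)
    show "Poly_Mapping.keys (\<Sum>i\<in>{2,13}. f i) \<subseteq> {MEK_pRAF, pMEK_PH}"
      unfolding f_def by (rule comb_keys) (simp add: erk_reactions_def spdefs lookup_add)
  qed (simp_all add: spdefs keys_sp2 keys_sp1)
  have hb2: "is_binomial (\<Sum>i\<in>{4,18,15,16}. f i) \<and> pvars (\<Sum>i\<in>{4,18,15,16}. f i) \<subseteq> {..<25}"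
  proof (rule binom_of)
    show "Poly_Mapping.keys (\<Sum>i\<in>{4,18,15,16}. f i) \<subseteq> {pMEK_pRAF, ppMEK_PH}"
      unfolding f_def by (rule comb_keys) (simp add: erk_reactions_def spdefs lookup_add)
  qed (simp_all add: spdefs keys_sp2 keys_sp1)
  have hb3: "is_binomial (\<Sum>i\<in>{5,15}. f i) \<and> pvars (\<Sum>i\<in>{5,15}. f i) \<subseteq> {..<25}"
  proof (rule binom_of)
    show "Poly_Mapping.keys (\<Sum>i\<in>{5,15}. f i) \<subseteq> {ERK_ppMEK, pERK_PH}"
      unfolding f_def by (rule comb_keys) (simp add: erk_reactions_def spdefs lookup_add)
  qed (simp_all add: spdefs keys_sp2 keys_sp1)
  have hb4: "is_binomial (\<Sum>i\<in>{7,20,22}. f i) \<and> pvars (\<Sum>i\<in>{7,20,22}. f i) \<subseteq> {..<25}"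
  proof (rule binom_of)
    show "Poly_Mapping.keys (\<Sum>i\<in>{7,20,22}. f i) \<subseteq> {pERK_ppMEK, ppERK_PH}"
      unfolding f_def by (rule comb_keys) (simp add: erk_reactions_def spdefs lookup_add)
  qed (simp_all add: spdefs keys_sp2 keys_sp1)
  have hb5: "is_binomial (\<Sum>i\<in>{24,23}. f i) \<and> pvars (\<Sum>i\<in>{24,23}. f i) \<subseteq> {..<25}"
  proof (rule binom_of)
    show "Poly_Mapping.keys (\<Sum>i\<in>{24,23}. f i) \<subseteq> {pRAF_ppERK, Z_PH2}"
      unfolding f_def by (rule comb_keys) (simp add: erk_reactions_def spdefs lookup_add)
  qed (simp_all add: spdefs keys_sp2 keys_sp1)
  have hb6: "is_binomial (\<Sum>i\<in>{12}. f i) \<and> pvars (\<Sum>i\<in>{12}. f i) \<subseteq> {..<25}"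
  proof (rule binom_of)
    show "Poly_Mapping.keys (\<Sum>i\<in>{12}. f i) \<subseteq> {RAF + RAS, RAS_RAF}"
      unfolding f_def by (rule comb_keys) (simp add: erk_reactions_def spdefs lookup_add)
  qed (simp_all add: spdefs keys_sp2 keys_sp1)
  have hb7: "is_binomial (\<Sum>i\<in>{13}. f i) \<and> pvars (\<Sum>i\<in>{13}. f i) \<subseteq> {..<25}"
  proof (rule binom_of)
    show "Poly_Mapping.keys (\<Sum>i\<in>{13}. f i) \<subseteq> {MEK + pRAF, MEK_pRAF}"
      unfolding f_def by (rule comb_keys) (simp add: erk_reactions_def spdefs lookup_add)
  qed (simp_all add: spdefs keys_sp2 keys_sp1)
  have hb8: "is_binomial (\<Sum>i\<in>{14}. f i) \<and> pvars (\<Sum>i\<in>{14}. f i) \<subseteq> {..<25}"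
  proof (rule binom_of)
    show "Poly_Mapping.keys (\<Sum>i\<in>{14}. f i) \<subseteq> {pMEK + pRAF, pMEK_pRAF}"
      unfolding f_def by (rule comb_keys) (simp add: erk_reactions_def spdefs lookup_add)
  qed (simp_all add: spdefs keys_sp2 keys_sp1)
  have hb9: "is_binomial (\<Sum>i\<in>{15}. f i) \<and> pvars (\<Sum>i\<in>{15}. f i) \<subseteq> {..<25}"
  proof (rule binom_of)
    show "Poly_Mapping.keys (\<Sum>i\<in>{15}. f i) \<subseteq> {ERK + ppMEK, ERK_ppMEK}"
      unfolding f_def by (rule comb_keys) (simp add: erk_reactions_def spdefs lookup_add)
  qed (simp_all add: spdefs keys_sp2 keys_sp1)
  have hb10: "is_binomial (\<Sum>i\<in>{16}. f i) \<and> pvars (\<Sum>i\<in>{16}. f i) \<subseteq> {..<25}"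
  proof (rule binom_of)
    show "Poly_Mapping.keys (\<Sum>i\<in>{16}. f i) \<subseteq> {pERK + ppMEK, pERK_ppMEK}"
      unfolding f_def by (rule comb_keys) (simp add: erk_reactions_def spdefs lookup_add)
  qed (simp_all add: spdefs keys_sp2 keys_sp1)
  have hb11: "is_binomial (\<Sum>i\<in>{17}. f i) \<and> pvars (\<Sum>i\<in>{17}. f i) \<subseteq> {..<25}"
  proof (rule binom_of)
    show "Poly_Mapping.keys (\<Sum>i\<in>{17}. f i) \<subseteq> {pRAF + RAFPH, RAF_RAFPH}"
      unfolding f_def by (rule comb_keys) (simp add: erk_reactions_def spdefs lookup_add)
  qed (simp_all add: spdefs keys_sp2 keys_sp1)
  have hb12: "is_binomial (\<Sum>i\<in>{18}. f i) \<and> pvars (\<Sum>i\<in>{18}. f i) \<subseteq> {..<25}"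
  proof (rule binom_of)
    show "Poly_Mapping.keys (\<Sum>i\<in>{18}. f i) \<subseteq> {ppMEK + PH, ppMEK_PH}"
      unfolding f_def by (rule comb_keys) (simp add: erk_reactions_def spdefs lookup_add)
  qed (simp_all add: spdefs keys_sp2 keys_sp1)
  have hb13: "is_binomial (\<Sum>i\<in>{19}. f i) \<and> pvars (\<Sum>i\<in>{19}. f i) \<subseteq> {..<25}"
  proof (rule binom_of)
    show "Poly_Mapping.keys (\<Sum>i\<in>{19}. f i) \<subseteq> {pMEK + PH, pMEK_PH}"
      unfolding f_def by (rule comb_keys) (simp add: erk_reactions_def spdefs lookup_add)
  qed (simp_all add: spdefs keys_sp2 keys_sp1)
  have hb14: "is_binomial (\<Sum>i\<in>{20}. f i) \<and> pvars (\<Sum>i\<in>{20}. f i) \<subseteq> {..<25}"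
  proof (rule binom_of)
    show "Poly_Mapping.keys (\<Sum>i\<in>{20}. f i) \<subseteq> {ppERK + PH, ppERK_PH}"
      unfolding f_def by (rule comb_keys) (simp add: erk_reactions_def spdefs lookup_add)
  qed (simp_all add: spdefs keys_sp2 keys_sp1)
  have hb15: "is_binomial (\<Sum>i\<in>{21}. f i) \<and> pvars (\<Sum>i\<in>{21}. f i) \<subseteq> {..<25}"
  proof (rule binom_of)
    show "Poly_Mapping.keys (\<Sum>i\<in>{21}. f i) \<subseteq> {pERK + PH, pERK_PH}"
      unfolding f_def by (rule comb_keys) (simp add: erk_reactions_def spdefs lookup_add)
  qed (simp_all add: spdefs keys_sp2 keys_sp1)
  have hb16: "is_binomial (\<Sum>i\<in>{22}. f i) \<and> pvars (\<Sum>i\<in>{22}. f i) \<subseteq> {..<25}"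
  proof (rule binom_of)
    show "Poly_Mapping.keys (\<Sum>i\<in>{22}. f i) \<subseteq> {pRAF + ppERK, pRAF_ppERK}"
      unfolding f_def by (rule comb_keys) (simp add: erk_reactions_def spdefs lookup_add)
  qed (simp_all add: spdefs keys_sp2 keys_sp1)
  have hb17: "is_binomial (\<Sum>i\<in>{23}. f i) \<and> pvars (\<Sum>i\<in>{23}. f i) \<subseteq> {..<25}"
  proof (rule binom_of)
    show "Poly_Mapping.keys (\<Sum>i\<in>{23}. f i) \<subseteq> {Z + PH2, Z_PH2}"
      unfolding f_def by (rule comb_keys) (simp add: erk_reactions_def spdefs lookup_add)
  qed (simp_all add: spdefs keys_sp2 keys_sp1)
  have bin: "\<forall>b\<in>B. is_binomial b \<and> pvars b \<subseteq> {..<25}"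
  proof
    fix b assume "b \<in> B"
    then obtain I where I: "I \<in> Is" "b = (\<Sum>i\<in>I. f i)" unfolding B_def by blast
    from I(1) have "I = {0,12} \<or> I = {2,13} \<or> I = {4,18,15,16} \<or> I = {5,15} \<or> I = {7,20,22} \<or> I = {24,23} \<or> I = {12} \<or> I = {13} \<or> I = {14} \<or> I = {15} \<or> I = {16} \<or> I = {17} \<or> I = {18} \<or> I = {19} \<or> I = {20} \<or> I = {21} \<or> I = {22} \<or> I = {23}" unfolding Is_def by (simp only: insert_iff empty_iff simp_thms)
    then show "is_binomial b \<and> pvars b \<subseteq> {..<25}" using hb0 hb1 hb2 hb3 hb4 hb5 hb6 hb7 hb8 hb9 hb10 hb11 hb12 hb13 hb14 hb15 hb16 hb17 I(2) by blast
  qed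
  have fin: "f i \<in> ideal_in 25 (f ` {..<25})" if "i < 25" for i
    using that by (intro ideal_mem) auto
  have BF: "B \<subseteq> ideal_in 25 (f ` {..<25})"
  proof
    fix b assume "b \<in> B"
    then obtain I where I: "I \<in> Is" "b = (\<Sum>i\<in>I. f i)" unfolding B_def by blast
    from I(1) have "finite I \<and> I \<subseteq> {..<25}" unfolding Is_def by auto
    then show "b \<in> ideal_in 25 (f ` {..<25})" using I(2) fin by (auto intro!: ideal_sum)
  qed
  have memB: "(\<Sum>i\<in>I. f i) \<in> ideal_in 25 B" if "I \<in> Is" for I
    using that unfolding B_def by (intro ideal_mem) auto
  have z8: "(\<Sum>i\<in>{8,12}. f i) = 0" unfolding f_def by (rule comb_zero) (simp add: erk_reactions_def spdefs lookup_add)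
  have z9: "(\<Sum>i\<in>{9,17}. f i) = 0" unfolding f_def by (rule comb_zero) (simp add: erk_reactions_def spdefs lookup_add)
  have z11: "(\<Sum>i\<in>{11,23}. f i) = 0" unfolding f_def by (rule comb_zero) (simp add: erk_reactions_def spdefs lookup_add)
  have z10: "(\<Sum>i\<in>{10,18,19,20,21}. f i) = 0" unfolding f_def by (rule comb_zero) (simp add: erk_reactions_def spdefs lookup_add)
  have z1: "(\<Sum>i\<in>{0,1,12,17,13,14,22,24,23}. f i) = 0" unfolding f_def by (rule comb_zero) (simp add: erk_reactions_def spdefs lookup_add)
  have z3: "(\<Sum>i\<in>{2,3,4,13,14,15,16,18,19}. f i) = 0" unfolding f_def by (rule comb_zero) (simp add: erk_reactions_def spdefs lookup_add)
  have z6: "(\<Sum>i\<in>{5,6,7,15,16,20,21,22}. f i) = 0" unfolding f_def by (rule comb_zero) (simp add: erk_reactions_def spdefs lookup_add)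
  have e0: "f 0 = (\<Sum>i\<in>{0,12}. f i) - (\<Sum>i\<in>{12}. f i)" by (simp add: ac_simps)
  have m0: "f 0 \<in> ideal_in 25 B" unfolding e0
    by (intro ideal_add ideal_diff ideal_uminus memB) (simp_all add: Is_def)
  have e1: "f 1 = - ((\<Sum>i\<in>{0,12}. f i) + (\<Sum>i\<in>{17}. f i) + (\<Sum>i\<in>{13}. f i) + (\<Sum>i\<in>{14}. f i) + (\<Sum>i\<in>{22}. f i) + (\<Sum>i\<in>{24,23}. f i))" unfolding eq_neg_iff_add_eq_0 using z1 by (simp add: ac_simps)
  have m1: "f 1 \<in> ideal_in 25 B" unfolding e1
    by (intro ideal_add ideal_diff ideal_uminus memB) (simp_all add: Is_def)
  have e2: "f 2 = (\<Sum>i\<in>{2,13}. f i) - (\<Sum>i\<in>{13}. f i)" by (simp add: ac_simps)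
  have m2: "f 2 \<in> ideal_in 25 B" unfolding e2
    by (intro ideal_add ideal_diff ideal_uminus memB) (simp_all add: Is_def)
  have e3: "f 3 = - ((\<Sum>i\<in>{2,13}. f i) + (\<Sum>i\<in>{4,18,15,16}. f i) + (\<Sum>i\<in>{14}. f i) + (\<Sum>i\<in>{19}. f i))" unfolding eq_neg_iff_add_eq_0 using z3 by (simp add: ac_simps)
  have m3: "f 3 \<in> ideal_in 25 B" unfolding e3
    by (intro ideal_add ideal_diff ideal_uminus memB) (simp_all add: Is_def)
  have e4: "f 4 = (\<Sum>i\<in>{4,18,15,16}. f i) - (\<Sum>i\<in>{18}. f i) - (\<Sum>i\<in>{15}. f i) - (\<Sum>i\<in>{16}. f i)" by (simp add: ac_simps)
  have m4: "f 4 \<in> ideal_in 25 B" unfolding e4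
    by (intro ideal_add ideal_diff ideal_uminus memB) (simp_all add: Is_def)
  have e5: "f 5 = (\<Sum>i\<in>{5,15}. f i) - (\<Sum>i\<in>{15}. f i)" by (simp add: ac_simps)
  have m5: "f 5 \<in> ideal_in 25 B" unfolding e5
    by (intro ideal_add ideal_diff ideal_uminus memB) (simp_all add: Is_def)
  have e6: "f 6 = - ((\<Sum>i\<in>{5,15}. f i) + (\<Sum>i\<in>{7,20,22}. f i) + (\<Sum>i\<in>{16}. f i) + (\<Sum>i\<in>{21}. f i))" unfolding eq_neg_iff_add_eq_0 using z6 by (simp add: ac_simps)
  have m6: "f 6 \<in> ideal_in 25 B" unfolding e6
    by (intro ideal_add ideal_diff ideal_uminus memB) (simp_all add: Is_def)
  have e7: "f 7 = (\<Sum>i\<in>{7,20,22}. f i) - (\<Sum>i\<in>{20}. f i) - (\<Sum>i\<in>{22}. f i)" by (simp add: ac_simps)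
  have m7: "f 7 \<in> ideal_in 25 B" unfolding e7
    by (intro ideal_add ideal_diff ideal_uminus memB) (simp_all add: Is_def)
  have e8: "f 8 = - ((\<Sum>i\<in>{12}. f i))" unfolding eq_neg_iff_add_eq_0 using z8 by (simp add: ac_simps)
  have m8: "f 8 \<in> ideal_in 25 B" unfolding e8
    by (intro ideal_add ideal_diff ideal_uminus memB) (simp_all add: Is_def)
  have e9: "f 9 = - ((\<Sum>i\<in>{17}. f i))" unfolding eq_neg_iff_add_eq_0 using z9 by (simp add: ac_simps)
  have m9: "f 9 \<in> ideal_in 25 B" unfolding e9
    by (intro ideal_add ideal_diff ideal_uminus memB) (simp_all add: Is_def)
  have e10: "f 10 = - ((\<Sum>i\<in>{18}. f i) + (\<Sum>i\<in>{19}. f i) + (\<Sum>i\<in>{20}. f i) + (\<Sum>i\<in>{21}. f i))" unfolding eq_neg_iff_add_eq_0 using z10 by (simp add: ac_simps)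
  have m10: "f 10 \<in> ideal_in 25 B" unfolding e10
    by (intro ideal_add ideal_diff ideal_uminus memB) (simp_all add: Is_def)
  have e11: "f 11 = - ((\<Sum>i\<in>{23}. f i))" unfolding eq_neg_iff_add_eq_0 using z11 by (simp add: ac_simps)
  have m11: "f 11 \<in> ideal_in 25 B" unfolding e11
    by (intro ideal_add ideal_diff ideal_uminus memB) (simp_all add: Is_def)
  have e12: "f 12 = (\<Sum>i\<in>{12}. f i)" by (simp add: ac_simps)
  have m12: "f 12 \<in> ideal_in 25 B" unfolding e12
    by (intro ideal_add ideal_diff ideal_uminus memB) (simp_all add: Is_def)
  have e13: "f 13 = (\<Sum>i\<in>{13}. f i)" by (simp add: ac_simps)
  have m13: "f 13 \<in> ideal_in 25 B" unfolding e13
    by (intro ideal_add ideal_diff ideal_uminus memB) (simp_all add: Is_def)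
  have e14: "f 14 = (\<Sum>i\<in>{14}. f i)" by (simp add: ac_simps)
  have m14: "f 14 \<in> ideal_in 25 B" unfolding e14
    by (intro ideal_add ideal_diff ideal_uminus memB) (simp_all add: Is_def)
  have e15: "f 15 = (\<Sum>i\<in>{15}. f i)" by (simp add: ac_simps)
  have m15: "f 15 \<in> ideal_in 25 B" unfolding e15
    by (intro ideal_add ideal_diff ideal_uminus memB) (simp_all add: Is_def)
  have e16: "f 16 = (\<Sum>i\<in>{16}. f i)" by (simp add: ac_simps)
  have m16: "f 16 \<in> ideal_in 25 B" unfolding e16
    by (intro ideal_add ideal_diff ideal_uminus memB) (simp_all add: Is_def)
  have e17: "f 17 = (\<Sum>i\<in>{17}. f i)" by (simp add: ac_simps)
  have m17: "f 17 \<in> ideal_in 25 B" unfolding e17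
    by (intro ideal_add ideal_diff ideal_uminus memB) (simp_all add: Is_def)
  have e18: "f 18 = (\<Sum>i\<in>{18}. f i)" by (simp add: ac_simps)
  have m18: "f 18 \<in> ideal_in 25 B" unfolding e18
    by (intro ideal_add ideal_diff ideal_uminus memB) (simp_all add: Is_def)
  have e19: "f 19 = (\<Sum>i\<in>{19}. f i)" by (simp add: ac_simps)
  have m19: "f 19 \<in> ideal_in 25 B" unfolding e19
    by (intro ideal_add ideal_diff ideal_uminus memB) (simp_all add: Is_def)
  have e20: "f 20 = (\<Sum>i\<in>{20}. f i)" by (simp add: ac_simps)
  have m20: "f 20 \<in> ideal_in 25 B" unfolding e20
    by (intro ideal_add ideal_diff ideal_uminus memB) (simp_all add: Is_def)
  have e21: "f 21 = (\<Sum>i\<in>{21}. f i)" by (simp add: ac_simps)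
  have m21: "f 21 \<in> ideal_in 25 B" unfolding e21
    by (intro ideal_add ideal_diff ideal_uminus memB) (simp_all add: Is_def)
  have e22: "f 22 = (\<Sum>i\<in>{22}. f i)" by (simp add: ac_simps)
  have m22: "f 22 \<in> ideal_in 25 B" unfolding e22
    by (intro ideal_add ideal_diff ideal_uminus memB) (simp_all add: Is_def)
  have e23: "f 23 = (\<Sum>i\<in>{23}. f i)" by (simp add: ac_simps)
  have m23: "f 23 \<in> ideal_in 25 B" unfolding e23
    by (intro ideal_add ideal_diff ideal_uminus memB) (simp_all add: Is_def)
  have e24: "f 24 = (\<Sum>i\<in>{24,23}. f i) - (\<Sum>i\<in>{23}. f i)" by (simp add: ac_simps)
  have m24: "f 24 \<in> ideal_in 25 B" unfolding e24
    by (intro ideal_add ideal_diff ideal_uminus memB) (simp_all add: Is_def)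
  have FB: "f ` {..<25} \<subseteq> ideal_in 25 B"
  proof
    fix p assume "p \<in> f ` {..<25}"
    then obtain i where i: "i < 25" "p = f i" by auto
    from i(1) have "i = 0 \<or> i = 1 \<or> i = 2 \<or> i = 3 \<or> i = 4 \<or> i = 5 \<or> i = 6 \<or> i = 7 \<or> i = 8 \<or> i = 9 \<or> i = 10 \<or> i = 11 \<or> i = 12 \<or> i = 13 \<or> i = 14 \<or> i = 15 \<or> i = 16 \<or> i = 17 \<or> i = 18 \<or> i = 19 \<or> i = 20 \<or> i = 21 \<or> i = 22 \<or> i = 23 \<or> i = 24" by presburger
    then show "p \<in> ideal_in 25 B" using i(2) m0 m1 m2 m3 m4 m5 m6 m7 m8 m9 m10 m11 m12 m13 m14 m15 m16 m17 m18 m19 m20 m21 m22 m23 m24 by blast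
  qed
  have idl: "steady_state_ideal num_species k erk_reactions = ideal_in 25 (f ` {..<25})"
    unfolding steady_state_ideal_def F by (simp add: num_species_def)
  have const: "\<forall>g\<in>f ` {..<25}. Poly_Mapping.lookup g 0 = 0"
    unfolding f_def by (auto intro!: ma_const simp: erk_reactions_def spdefs)
  show ?thesis unfolding has_toric_steady_states_def idl
  proof (intro conjI exI[of _ B] exI[of _ "\<lambda>_. 0"])
    show "\<forall>b\<in>B. is_binomial b \<and> pvars b \<subseteq> {..<num_species}" using bin by (simp add: num_species_def)
    show "ideal_in num_species B = ideal_in 25 (f ` {..<25})"
      unfolding num_species_def by (simp add: ideal_eqI BF FB)
    show "\<forall>i<num_species. 0 \<le> (0::real)" by simp
    show "\<forall>p\<in>ideal_in 25 (f ` {..<25}). peval p (\<lambda>_. 0) = 0"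
      using ideal_const[OF const] by (simp add: peval_zero)
  qed
qed

end
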